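(* Let $n\ge3$, $\mu\in\mathbb{C}$, and let $\lambda=(\lambda_1,\dots,\lambda_n)\in\mathbb{C}^n$ satisfy $\lambda_1-\lambda_2=\cdots=\lambda_{n-2}-\lambda_{n-1}=\mu$ and $\sigma:=\lambda_{n-1}-\lambda_n\notin\mathbb{N}$. Then the element $$u_\lambda=(x_1x_2\cdots x_n)^{\mu}\sum_{i_1,\dots,i_{n-1}=0}^{\infty}\frac{(-1)^{i_1+\cdots+i_{n-1}}\langle\mu\rangle_{i_{n-1}}}{i_1!\cdots i_{n-1}!\,\langle\sigma\rangle_{i_{n-1}}}\,E_{2,1}^{i_1}E_{3,2}^{i_2}\cdots E_{n,n-1}^{i_{n-1}}v_\lambda\; x_1^{i_1}x_2^{i_2-i_1}\cdots x_{n-1}^{i_{n-1}-i_{n-2}}x_n^{-i_{n-1}}$$ of $\widetilde M$ is a singular vector of weight $\lambda$: $E_{i,j}u_\lambda=0$ for all $1\le i<j\le n$ and $E_{k,k}u_\lambda=\lambda_ku_\lambda$ for all $k$.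
   Context: $gl(n)$ has basis of matrix units $E_{i,j}$. $\langle c\rangle_i=c(c-1)\cdots(c-i+1)$, $\langle c\rangle_0=1$. $M_\lambda$ is the Verma $gl(n)$-module with highest weight vector $v_\lambda$: $E_{i,j}v_\lambda=0$ for $i<j$, $E_{k,k}v_\lambda=\lambda_kv_\lambda$. $\widetilde M$ is the space of formal series $\sum_{\vec i\in\mathbb{Z}^n}v_{\vec i}\,x_1^{i_1+\mu}\cdots x_n^{i_n+\mu}$ with $v_{\vec i}\in M_\lambda$ arbitrary, a $gl(n)$-module via $E_{j_1,j_2}(v\,x^m)=E_{j_1,j_2}(v)\,x^m+v\,(x_{j_1}\partial_{x_{j_2}}-\mu\delta_{j_1,j_2})(x^m)$ (isomorphic to the weight-completed tensor product of $M_\lambda$ with the point representation $E_{i,j}\mapsto x_i\partial_{x_j}-\mu\delta_{i,j}$). *)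

theory Defs
  imports Complex_Main
begin

definition ffac :: "complex \<Rightarrow> nat \<Rightarrow> complex" where
  "ffac c i = (\<Prod>j<i. c - of_nat j)"

definition gl_module ::
  "(complex \<Rightarrow> 'v::ab_group_add \<Rightarrow> 'v) \<Rightarrow> nat \<Rightarrow> (nat \<Rightarrow> nat \<Rightarrow> 'v \<Rightarrow> 'v) \<Rightarrow> bool" where
  "gl_module sm n rho \<longleftrightarrow> Vector_Spaces.vector_space sm \<and>
     (\<forall>i\<in>{1..n}. \<forall>j\<in>{1..n}. Vector_Spaces.linear sm sm (rho i j)) \<and>
     (\<forall>i\<in>{1..n}. \<forall>j\<in>{1..n}. \<forall>k\<in>{1..n}. \<forall>l\<in>{1..n}. \<forall>w.
        rho i j (rho k l w) - rho k l (rho i j w)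
          = (if j = k then rho i l w else 0) - (if l = i then rho k j w else 0))"

definition neg_roots :: "nat \<Rightarrow> (nat \<times> nat) list" where
  "neg_roots n = [(i, j). i \<leftarrow> [2..<n+1], j \<leftarrow> [1..<i]]"

definition pbw_mono ::
  "nat \<Rightarrow> (nat \<Rightarrow> nat \<Rightarrow> 'v \<Rightarrow> 'v) \<Rightarrow> 'v \<Rightarrow> (nat \<Rightarrow> nat \<Rightarrow> nat) \<Rightarrow> 'v" where
  "pbw_mono n rho v a = foldr (\<lambda>(i, j) w. (rho i j ^^ a i j) w) (neg_roots n) v"

definition pbw_exps :: "nat \<Rightarrow> (nat \<Rightarrow> nat \<Rightarrow> nat) set" where
  "pbw_exps n = {a. \<forall>i j. a i j \<noteq> 0 \<longrightarrow> 1 \<le> j \<and> j < i \<and> i \<le> n}"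

text \<open>(V, rho) with vector v is (isomorphic to) the Verma module M_lambda with highest
  weight vector v_lambda = v: v is a highest weight vector of weight lambda, and the ordered
  PBW monomials in the E_{i,j} (i>j) applied to v form a basis of V (i.e. V is free of
  rank one over U(n^-) on v).\<close>
definition verma_module ::
  "(complex \<Rightarrow> 'v::ab_group_add \<Rightarrow> 'v) \<Rightarrow> nat \<Rightarrow> (nat \<Rightarrow> nat \<Rightarrow> 'v \<Rightarrow> 'v)
     \<Rightarrow> (nat \<Rightarrow> complex) \<Rightarrow> 'v \<Rightarrow> bool" where
  "verma_module sm n rho lam v \<longleftrightarrow> gl_module sm n rho \<and>
     (\<forall>i\<in>{1..n}. \<forall>j\<in>{1..n}. i < j \<longrightarrow> rho i j v = 0) \<and>
     (\<forall>k\<in>{1..n}. rho k k v = sm (lam k) v) \<and>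
     inj_on (pbw_mono n rho v) (pbw_exps n) \<and>
     \<not> module.dependent sm (pbw_mono n rho v ` pbw_exps n) \<and>
     module.span sm (pbw_mono n rho v ` pbw_exps n) = UNIV"

text \<open>Elements of M~: a formal series  sum_m f(m) x_1^(m_1+mu) ... x_n^(m_n+mu)  is
  represented by its coefficient function f on exponent vectors m :: nat \<Rightarrow> int
  (only the components 1..n are meaningful; series are taken to vanish on vectors
  with nonzero components outside 1..n).
  Action of E_{j1,j2}:  E(v x^m) = E(v) x^m + v (x_{j1} d/dx_{j2} - mu delta_{j1,j2}) x^m.
  The coefficient at m of the second part comes from the term at m' = m - e_{j1} + e_{j2}.\<close>
definition shift :: "nat \<Rightarrow> nat \<Rightarrow> (nat \<Rightarrow> int) \<Rightarrow> (nat \<Rightarrow> int)" where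
  "shift j1 j2 m = (\<lambda>k. m k - (if k = j1 then 1 else 0) + (if k = j2 then 1 else 0))"

definition act_tilde ::
  "(complex \<Rightarrow> 'v::ab_group_add \<Rightarrow> 'v) \<Rightarrow> (nat \<Rightarrow> nat \<Rightarrow> 'v \<Rightarrow> 'v) \<Rightarrow> complex
     \<Rightarrow> nat \<Rightarrow> nat \<Rightarrow> ((nat \<Rightarrow> int) \<Rightarrow> 'v) \<Rightarrow> ((nat \<Rightarrow> int) \<Rightarrow> 'v)" where
  "act_tilde sm rho mu j1 j2 f = (\<lambda>m.
      rho j1 j2 (f m)
      + sm (of_int (shift j1 j2 m j2) + mu) (f (shift j1 j2 m))
      - (if j1 = j2 then sm mu (f m) else 0))"

definition idx_tuples :: "nat \<Rightarrow> (nat \<Rightarrow> nat) set" where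
  "idx_tuples n = {i. \<forall>k. k \<notin> {1..n-1} \<longrightarrow> i k = 0}"

text \<open>Exponent shift vector of the monomial x_1^{i_1} x_2^{i_2-i_1} ... x_{n-1}^{i_{n-1}-i_{n-2}} x_n^{-i_{n-1}}
  (the overall factor (x_1...x_n)^mu is the "+mu" built into M~).\<close>
definition u_expo :: "nat \<Rightarrow> (nat \<Rightarrow> nat) \<Rightarrow> (nat \<Rightarrow> int)" where
  "u_expo n i = (\<lambda>k. if k = 1 then int (i 1)
                     else if 2 \<le> k \<and> k \<le> n - 1 then int (i k) - int (i (k - 1))
                     else if k = n then - int (i (n - 1))
                     else 0)"

definition lower_vec :: "nat \<Rightarrow> (nat \<Rightarrow> nat \<Rightarrow> 'v \<Rightarrow> 'v) \<Rightarrow> 'v \<Rightarrow> (nat \<Rightarrow> nat) \<Rightarrow> 'v" where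
  "lower_vec n rho v i = foldr (\<lambda>k w. (rho (k + 1) k ^^ i k) w) [1..<n] v"

definition u_coeff ::
  "(complex \<Rightarrow> 'v \<Rightarrow> 'v) \<Rightarrow> nat \<Rightarrow> (nat \<Rightarrow> nat \<Rightarrow> 'v \<Rightarrow> 'v) \<Rightarrow> 'v
     \<Rightarrow> complex \<Rightarrow> complex \<Rightarrow> (nat \<Rightarrow> nat) \<Rightarrow> 'v" where
  "u_coeff sm n rho v mu sigma i =
     sm ((-1) ^ (\<Sum>k=1..n-1. i k) * ffac mu (i (n - 1))
          / ((\<Prod>k=1..n-1. of_nat (fact (i k))) * ffac sigma (i (n - 1))))
        (lower_vec n rho v i)"

definition u_lambda ::
  "(complex \<Rightarrow> 'v::ab_group_add \<Rightarrow> 'v) \<Rightarrow> nat \<Rightarrow> (nat \<Rightarrow> nat \<Rightarrow> 'v \<Rightarrow> 'v) \<Rightarrow> 'v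
     \<Rightarrow> complex \<Rightarrow> complex \<Rightarrow> ((nat \<Rightarrow> int) \<Rightarrow> 'v)" where
  "u_lambda sm n rho v mu sigma = (\<lambda>m.
     \<Sum>i\<in>{i\<in>idx_tuples n. u_expo n i = m}. u_coeff sm n rho v mu sigma i)"

end

theory Submission
  imports Defs
begin


lemma shift_shift: "a \<noteq> b \<Longrightarrow> shift a b (shift b a m) = m"
  by (auto simp: shift_def)

lemma shift_same: "shift k k m = m"
  by (auto simp: shift_def)

lemma u_expo_inj:
  assumes n: "n \<ge> 3" and i: "i \<in> idx_tuples n" and i': "i' \<in> idx_tuples n"
    and e: "u_expo n i = u_expo n i'"
  shows "i = i'"
proof
  fix k
  show "i k = i' k"
  proof (induction k)
    case 0
    then show ?case using i i' by (auto simp: idx_tuples_def)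
  next
    case (Suc k)
    show ?case
    proof (cases "Suc k \<le> n - 1")
      case True
      have "u_expo n i (Suc k) = u_expo n i' (Suc k)" using e by simp
      then show ?thesis using True Suc n i i' 
        by (auto simp: u_expo_def idx_tuples_def split: if_splits)
    next
      case False
      then show ?thesis using i i' by (auto simp: idx_tuples_def)
    qed
  qed
qed

lemma idx_upd: "i \<in> idx_tuples n \<Longrightarrow> 1 \<le> j \<Longrightarrow> j \<le> n - 1 \<Longrightarrow> i(j := x) \<in> idx_tuples n"
  by (auto simp: idx_tuples_def)

lemma shift_u_expo:
  assumes n: "n \<ge> 3" and i: "i \<in> idx_tuples n" and j: "1 \<le> j" "j \<le> n - 1"
  shows "shift (j+1) j (u_expo n i) = u_expo n (i(j := Suc (i j)))"
proof (rule ext)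
  fix k
  let ?i = "i(j := Suc (i j))"
  have "u_expo n ?i k = u_expo n i k + (if k = j then 1 else 0) - (if k = j+1 then 1 else 0)"
  proof (cases "k = 1")
    case True
    then show ?thesis using n j by (simp add: u_expo_def)
  next
    case k1: False
    show ?thesis
    proof (cases "2 \<le> k \<and> k \<le> n - 1")
      case True
      have "k - 1 = j \<longleftrightarrow> k = j + 1" using True by auto
      then show ?thesis using True k1 n j by (simp add: u_expo_def)
    next
      case k2: False
      show ?thesis
      proof (cases "k = n")
        case True
        have "n - 1 = j \<longleftrightarrow> k = j + 1" using True n j by auto
        then show ?thesis using True k1 k2 n j by (simp add: u_expo_def)
      next
        case False
        then have "k \<noteq> j" "k \<noteq> j + 1" using k1 k2 j n by auto
        then show ?thesis using False k1 k2 by (auto simp add: u_expo_def)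
      qed
    qed
  qed
  then show "shift (j+1) j (u_expo n i) k = u_expo n ?i k"
    by (simp add: shift_def)
qed

lemma u_lambda_at:
  assumes n: "n \<ge> 3" and i: "i \<in> idx_tuples n"
  shows "u_lambda sm n rho v mu sigma (u_expo n i) = u_coeff sm n rho v mu sigma i"
proof -
  have "{i' \<in> idx_tuples n. u_expo n i' = u_expo n i} = {i}"
    using u_expo_inj[OF n _ i] i by auto
  then show ?thesis by (simp add: u_lambda_def)
qed

lemma u_lambda_out:
  assumes "m \<notin> u_expo n ` idx_tuples n"
  shows "u_lambda sm n rho v mu sigma m = 0"
proof -
  have h: "{i' \<in> idx_tuples n. u_expo n i' = m} = {}" using assms by auto
  show ?thesis unfolding u_lambda_def h by simp
qed



locale VM =
  fixes sm :: "complex \<Rightarrow> 'v::ab_group_add \<Rightarrow> 'v" and n :: nat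
    and rho :: "nat \<Rightarrow> nat \<Rightarrow> 'v \<Rightarrow> 'v" and lam :: "nat \<Rightarrow> complex" and v :: 'v
  assumes md: "module sm"
    and lin: "\<And>i j. i \<in> {1..n} \<Longrightarrow> j \<in> {1..n} \<Longrightarrow> module_hom sm sm (rho i j)"
    and comm: "\<And>i j k l w. i \<in> {1..n} \<Longrightarrow> j \<in> {1..n} \<Longrightarrow> k \<in> {1..n} \<Longrightarrow> l \<in> {1..n} \<Longrightarrow>
        rho i j (rho k l w) - rho k l (rho i j w)
          = (if j = k then rho i l w else 0) - (if l = i then rho k j w else 0)"
    and hw: "\<And>i j. i \<in> {1..n} \<Longrightarrow> j \<in> {1..n} \<Longrightarrow> i < j \<Longrightarrow> rho i j v = 0"
    and wt: "\<And>k. k \<in> {1..n} \<Longrightarrow> rho k k v = sm (lam k) v"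
begin

lemma sm_addr: "sm a (x + y) = sm a x + sm a y" using md by (rule module.scale_right_distrib)
lemma sm_addl: "sm (a + b) x = sm a x + sm b x" using md by (rule module.scale_left_distrib)
lemma sm_diffl: "sm (a - b) x = sm a x - sm b x" using md by (rule module.scale_left_diff_distrib)
lemma sm_diffr: "sm a (x - y) = sm a x - sm a y" using md by (rule module.scale_right_diff_distrib)
lemma sm_sm: "sm a (sm b x) = sm (a * b) x" using md by (rule module.scale_scale)
lemma sm_one: "sm 1 x = x" using md by (rule module.scale_one)
lemma sm_zl: "sm 0 x = 0" using md by (rule module.scale_zero_left)
lemma sm_zr: "sm a 0 = 0" using md by (rule module.scale_zero_right)
lemma sm_neg: "sm (- a) x = - sm a x" using md by (rule module.scale_minus_left)

lemma rho_add: "i \<in> {1..n} \<Longrightarrow> j \<in> {1..n} \<Longrightarrow> rho i j (x + y) = rho i j x + rho i j y"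
  using lin module_hom.add by blast
lemma rho_sm: "i \<in> {1..n} \<Longrightarrow> j \<in> {1..n} \<Longrightarrow> rho i j (sm c x) = sm c (rho i j x)"
  using lin module_hom.scale by blast
lemma rho_0: "i \<in> {1..n} \<Longrightarrow> j \<in> {1..n} \<Longrightarrow> rho i j 0 = 0"
  using lin module_hom.zero by blast
lemma rho_diff: "i \<in> {1..n} \<Longrightarrow> j \<in> {1..n} \<Longrightarrow> rho i j (x - y) = rho i j x - rho i j y"
  using lin module_hom.diff by blast

lemma pow_sm:
  assumes "i \<in> {1..n}" "j \<in> {1..n}"
  shows "(rho i j ^^ a) (sm c x) = sm c ((rho i j ^^ a) x)"
  by (induction a) (simp_all add: rho_sm[OF assms])

lemma pow_0:
  assumes "i \<in> {1..n}" "j \<in> {1..n}"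
  shows "(rho i j ^^ a) 0 = 0"
  by (induction a) (simp_all add: rho_0[OF assms])

lemma weight_pow:
  assumes H: "\<And>x. Hm (Fm x) = Fm (Hm x) + sm \<beta> (Fm x)"
    and Fs: "\<And>c x. Fm (sm c x) = sm c (Fm x)"
    and w: "Hm w = sm \<alpha> w"
  shows "Hm ((Fm ^^ a) w) = sm (\<alpha> + of_nat a * \<beta>) ((Fm ^^ a) w)"
proof (induction a)
  case 0
  then show ?case using w by simp
next
  case (Suc a)
  have "Hm ((Fm ^^ Suc a) w) = Fm (Hm ((Fm ^^ a) w)) + sm \<beta> ((Fm ^^ Suc a) w)"
    using H by simp
  also have "\<dots> = sm (\<alpha> + of_nat a * \<beta>) ((Fm ^^ Suc a) w) + sm \<beta> ((Fm ^^ Suc a) w)"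
    using Suc Fs by simp
  also have "\<dots> = sm (\<alpha> + of_nat (Suc a) * \<beta>) ((Fm ^^ Suc a) w)"
    by (simp add: sm_addl[symmetric] algebra_simps)
  finally show ?case .
qed

lemma H_F:
  assumes k: "k \<in> {1..n}" and l: "1 \<le> l" "l < n"
  shows "rho k k (rho (l+1) l x) = rho (l+1) l (rho k k x)
           + sm ((if k = l + 1 then 1 else 0) - (if k = l then 1 else 0)) (rho (l+1) l x)"
proof -
  have c: "rho k k (rho (l+1) l x) - rho (l+1) l (rho k k x)
     = (if k = l+1 then rho k l x else 0) - (if l = k then rho (l+1) k x else 0)"
    using comm[of k k "l+1" l x] k l by auto
  show ?thesis
  proof (cases "k = l+1")
    case True
    then show ?thesis using c by (simp add: sm_one algebra_simps)
  next
    case False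
    show ?thesis
    proof (cases "k = l")
      case True
      then show ?thesis using c False by (simp add: sm_neg sm_one algebra_simps)
    next
      case False
      then show ?thesis using c \<open>k \<noteq> l+1\<close> by (simp add: sm_zl algebra_simps)
    qed
  qed
qed

definition T :: "nat \<Rightarrow> (nat \<Rightarrow> nat) \<Rightarrow> 'v" where
  "T l i = foldr (\<lambda>k w. (rho (k + 1) k ^^ i k) w) [l..<n] v"

lemma T_step: "l < n \<Longrightarrow> T l i = (rho (l+1) l ^^ i l) (T (Suc l) i)"
  by (simp add: T_def upt_conv_Cons)

lemma T_end: "n \<le> l \<Longrightarrow> T l i = v"
  by (simp add: T_def)

lemma T_cong: "(\<And>k. l \<le> k \<Longrightarrow> k < n \<Longrightarrow> i k = i' k) \<Longrightarrow> T l i = T l i'"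
  unfolding T_def by (rule foldr_cong) auto

definition wtT :: "nat \<Rightarrow> (nat \<Rightarrow> nat) \<Rightarrow> nat \<Rightarrow> complex" where
  "wtT l i k = (if l \<le> k - 1 \<and> k - 1 < n \<and> 1 \<le> k then of_nat (i (k - 1)) else 0)
              - (if l \<le> k \<and> k < n then of_nat (i k) else 0)"

lemma T_weight:
  assumes k: "k \<in> {1..n}" and l: "1 \<le> l"
  shows "rho k k (T l i) = sm (lam k + wtT l i k) (T l i)"
  using l
proof (induction "n - l" arbitrary: l)
  case 0
  then show ?case using wt[OF k] k by (auto simp add: T_end wtT_def)
next
  case (Suc d)
  then have ln: "l < n" by simp
  have IH: "rho k k (T (Suc l) i) = sm (lam k + wtT (Suc l) i k) (T (Suc l) i)"
    using Suc by simp
  have "rho k k (T l i) = sm (lam k + wtT (Suc l) i k + of_nat (i l) *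
       ((if k = l + 1 then 1 else 0) - (if k = l then 1 else 0))) (T l i)"
    unfolding T_step[OF ln]
    by (rule weight_pow[OF H_F[OF k Suc.prems ln] pow_sm[of _ _ 1, simplified] IH])
      (use Suc.prems ln in auto)
  also have "lam k + wtT (Suc l) i k + of_nat (i l) *
       ((if k = l + 1 then 1 else 0) - (if k = l then 1 else 0)) = lam k + wtT l i k"
    using Suc.prems ln k by (auto simp: wtT_def)
  finally show ?case .
qed

lemma E_F_comm:
  assumes j: "1 \<le> j" "j < n" and l: "1 \<le> l" "l < n" "l \<noteq> j"
  shows "rho j (j+1) (rho (l+1) l x) = rho (l+1) l (rho j (j+1) x)"
  using comm[of j "j+1" "l+1" l x] j l by auto

lemma E_Fpow_comm:
  assumes j: "1 \<le> j" "j < n" and l: "1 \<le> l" "l < n" "l \<noteq> j"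
  shows "rho j (j+1) ((rho (l+1) l ^^ a) x) = (rho (l+1) l ^^ a) (rho j (j+1) x)"
proof (induction a)
  case (Suc a)
  then show ?case using E_F_comm[OF j l, of "(rho (l+1) l ^^ a) x"] by simp
qed simp

lemma E_T_zero:
  assumes j: "1 \<le> j" "j < n" and l: "j < l"
  shows "rho j (j+1) (T l i) = 0"
  using l
proof (induction "n - l" arbitrary: l)
  case 0
  then show ?case using hw[of j "j+1"] j by (simp add: T_end)
next
  case (Suc d)
  then have ln: "l < n" by simp
  have IH: "rho j (j+1) (T (Suc l) i) = 0" using Suc by simp
  have "rho j (j+1) (T l i) = (rho (l+1) l ^^ i l) (rho j (j+1) (T (Suc l) i))"
    unfolding T_step[OF ln] using Suc.prems ln j by (intro E_Fpow_comm) auto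
  also have "\<dots> = 0" unfolding IH by (rule pow_0) (use Suc.prems ln in auto)
  finally show ?case .
qed

lemma EF:
  assumes j: "1 \<le> j" "j < n"
  shows "rho j (j+1) (rho (j+1) j x) = rho (j+1) j (rho j (j+1) x) + rho j j x - rho (j+1) (j+1) x"
  using comm[of j "j+1" "j+1" j x] j by (auto simp: algebra_simps)

lemma sl2_aux:
  assumes j: "1 \<le> j" "j < n" and Ew: "rho j (j+1) w = 0"
    and w1: "rho j j w = sm \<alpha> w" and w2: "rho (j+1) (j+1) w = sm \<alpha>' w"
  shows "rho j (j+1) ((rho (j+1) j ^^ Suc a) w)
     = sm (of_nat (Suc a) * (\<alpha> - \<alpha>' - of_nat a)) ((rho (j+1) j ^^ a) w)"
proof (induction a)
  case 0
  then show ?case using EF[OF j, of w] Ew w1 w2 j by (simp add: rho_0 sm_diffl)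
next
  case (Suc a)
  let ?F = "rho (j+1) j"
  have jn: "j \<in> {1..n}" "j+1 \<in> {1..n}" using j by auto
  have Fs: "\<And>c x. ?F (sm c x) = sm c (?F x)" using rho_sm jn by blast
  have W1: "rho j j ((?F ^^ Suc a) w) = sm (\<alpha> + of_nat (Suc a) * (-1)) ((?F ^^ Suc a) w)"
    by (rule weight_pow[where Hm="rho j j" and Fm="rho (j+1) j"]) (use H_F[of j j] j Fs w1 in auto)
  have W2: "rho (j+1) (j+1) ((?F ^^ Suc a) w) = sm (\<alpha>' + of_nat (Suc a) * 1) ((?F ^^ Suc a) w)"
    by (rule weight_pow[where Hm="rho (j+1) (j+1)" and Fm="rho (j+1) j"]) (use H_F[of "j+1" j] j Fs w2 in auto)
  have "rho j (j+1) ((?F ^^ Suc (Suc a)) w) = ?F (rho j (j+1) ((?F ^^ Suc a) w))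
      + rho j j ((?F ^^ Suc a) w) - rho (j+1) (j+1) ((?F ^^ Suc a) w)"
    using EF[OF j] by simp
  also have "\<dots> = sm (of_nat (Suc a) * (\<alpha> - \<alpha>' - of_nat a)) ((?F ^^ Suc a) w)
      + sm (\<alpha> + of_nat (Suc a) * (-1)) ((?F ^^ Suc a) w)
      - sm (\<alpha>' + of_nat (Suc a) * 1) ((?F ^^ Suc a) w)"
    unfolding Suc W1 W2 by (simp add: Fs[simplified])
  also have "\<dots> = sm (of_nat (Suc (Suc a)) * (\<alpha> - \<alpha>' - of_nat (Suc a))) ((?F ^^ Suc a) w)"
    unfolding sm_addl[symmetric] sm_diffl[symmetric] by (simp add: algebra_simps)
  finally show ?case .
qed

lemma sl2:
  assumes j: "1 \<le> j" "j < n" and Ew: "rho j (j+1) w = 0"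
    and w1: "rho j j w = sm \<alpha> w" and w2: "rho (j+1) (j+1) w = sm \<alpha>' w"
  shows "rho j (j+1) ((rho (j+1) j ^^ a) w)
     = sm (of_nat a * (\<alpha> - \<alpha>' - (of_nat a - 1))) ((rho (j+1) j ^^ (a - 1)) w)"
proof (cases a)
  case 0
  then show ?thesis using Ew by (simp add: sm_zl)
next
  case (Suc b)
  then show ?thesis using sl2_aux[OF assms, of b] by (simp add: algebra_simps)
qed

definition hh :: "nat \<Rightarrow> (nat \<Rightarrow> nat) \<Rightarrow> complex" where
  "hh j i = lam j - lam (j+1) + (if j+1 < n then of_nat (i (j+1)) else 0)"

lemma E_T:
  assumes j: "1 \<le> j" "j < n" and l: "1 \<le> l" "l \<le> j"
  shows "rho j (j+1) (T l i) = sm (of_nat (i j) * (hh j i - (of_nat (i j) - 1))) (T l (i(j := i j - 1)))"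
  using l
proof (induction "j - l" arbitrary: l)
  case 0
  then have lj: "l = j" by simp
  have k1: "j \<in> {1..n}" "j + 1 \<in> {1..n}" using j by auto
  have Ew: "rho j (j+1) (T (Suc j) i) = 0" using E_T_zero[OF j] by simp
  have w1: "rho j j (T (Suc j) i) = sm (lam j + wtT (Suc j) i j) (T (Suc j) i)"
    using T_weight[OF k1(1)] by simp
  have w2: "rho (j+1) (j+1) (T (Suc j) i) = sm (lam (j+1) + wtT (Suc j) i (j+1)) (T (Suc j) i)"
    using T_weight[OF k1(2)] by simp
  have e1: "wtT (Suc j) i j = 0" by (auto simp add: wtT_def)
  have e2: "lam j + wtT (Suc j) i j - (lam (j+1) + wtT (Suc j) i (j+1)) = hh j i"
    by (auto simp add: wtT_def hh_def)
  have TC: "T (Suc j) (i(j := i j - 1)) = T (Suc j) i" by (rule T_cong) auto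
  show ?case unfolding lj T_step[OF j(2)]
    using sl2[OF j Ew w1 w2, of "i j"] e2 TC by simp
next
  case (Suc d)
  then have lj: "l < j" by simp
  then have ln: "l < n" using j by simp
  have IH: "rho j (j+1) (T (Suc l) i) = sm (of_nat (i j) * (hh j i - (of_nat (i j) - 1))) (T (Suc l) (i(j := i j - 1)))"
    using Suc lj by simp
  have ll: "l+1 \<in> {1..n}" "l \<in> {1..n}" using Suc.prems ln by auto
  have "rho j (j+1) (T l i) = (rho (l+1) l ^^ i l) (rho j (j+1) (T (Suc l) i))"
    unfolding T_step[OF ln] using Suc.prems ln j lj by (intro E_Fpow_comm) auto
  also have "\<dots> = sm (of_nat (i j) * (hh j i - (of_nat (i j) - 1))) (T l (i(j := i j - 1)))"
    unfolding IH pow_sm[OF ll] T_step[OF ln, of "i(j := i j - 1)"] using lj by simp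
  finally show ?case .
qed

end


lemma ffac_Suc: "ffac c (Suc s) = ffac c s * (c - of_nat s)"
  by (simp add: ffac_def)

lemma sub_nz:
  fixes c :: complex
  assumes "c \<notin> \<nat>" shows "c - of_nat s \<noteq> 0"
proof
  assume "c - of_nat s = 0"
  then have "c = of_nat s" by simp
  then have "c \<in> \<nat>" by (simp only: of_nat_in_Nats)
  with assms show False by blast
qed

lemma ffac_nz:
  assumes "c \<notin> \<nat>" shows "ffac c s \<noteq> 0"
  unfolding ffac_def using sub_nz[OF assms] by simp

lemma sum_upd:
  assumes "finite A" "j \<in> A"
  shows "(\<Sum>k\<in>A. (f(j := x)) k) = x + (\<Sum>k\<in>A - {j}. f k)"
proof -
  have "(\<Sum>k\<in>A. (f(j := x)) k) = (f(j := x)) j + (\<Sum>k\<in>A - {j}. (f(j := x)) k)"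
    using assms by (rule sum.remove)
  also have "(\<Sum>k\<in>A - {j}. (f(j := x)) k) = (\<Sum>k\<in>A - {j}. f k)"
    by (rule sum.cong) auto
  finally show ?thesis by simp
qed

lemma prod_upd:
  assumes "finite A" "j \<in> A"
  shows "(\<Prod>k\<in>A. g ((f(j := x)) k)) = g x * (\<Prod>k\<in>A - {j}. g (f k))"
proof -
  have "(\<Prod>k\<in>A. g ((f(j := x)) k)) = g ((f(j := x)) j) * (\<Prod>k\<in>A - {j}. g ((f(j := x)) k))"
    using assms by (rule prod.remove)
  also have "(\<Prod>k\<in>A - {j}. g ((f(j := x)) k)) = (\<Prod>k\<in>A - {j}. g (f k))"
    by (rule prod.cong) auto
  finally show ?thesis by simp
qed

lemma alg_a:
  fixes q FM t f P FS y :: complex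
  assumes "t \<noteq> 0"
  shows "(- q) * FM / ((t * f * P) * FS) * (t * y) + y * (q * FM / ((f * P) * FS)) = 0"
proof -
  have "(- q) * FM / ((t * f * P) * FS) * (t * y) = - (y * (q * FM / ((f * P) * FS)))"
    using assms by (simp add: divide_simps)
  then show ?thesis by simp
qed

lemma alg_b:
  fixes q FM t f P FS w z :: complex
  assumes "t \<noteq> 0" "z \<noteq> 0"
  shows "(- q) * (FM * w) / ((t * f * P) * (FS * z)) * (t * z) + w * (q * FM / ((f * P) * FS)) = 0"
proof -
  have "(- q) * (FM * w) / ((t * f * P) * (FS * z)) * (t * z) = - (w * (q * FM / ((f * P) * FS)))"
    using assms by (simp add: divide_simps)
  then show ?thesis by simp
qed

definition Cf :: "nat \<Rightarrow> complex \<Rightarrow> complex \<Rightarrow> (nat \<Rightarrow> nat) \<Rightarrow> complex" where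
  "Cf n mu sigma i = (-1) ^ (\<Sum>k=1..n-1. i k) * ffac mu (i (n - 1))
          / ((\<Prod>k=1..n-1. of_nat (fact (i k))) * ffac sigma (i (n - 1)))"

context VM begin

lemma wt_expo:
  assumes n: "n \<ge> 3" and i: "i \<in> idx_tuples n" and k: "k \<in> {1..n}"
  shows "of_int (u_expo n i k) + wtT 1 i k = 0"
proof -
  show ?thesis
  proof (cases "k = 1")
    case True
    then show ?thesis using n by (simp add: u_expo_def wtT_def)
  next
    case k1: False
    show ?thesis
    proof (cases "k = n")
      case True
      then show ?thesis using n by (auto simp add: u_expo_def wtT_def)
    next
      case False
      then have "2 \<le> k" "k \<le> n - 1" "k - 1 \<ge> 1" using k k1 by auto
      then show ?thesis using False k1 k by (auto simp add: u_expo_def wtT_def)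
    qed
  qed
qed

lemma scalar_id:
  assumes n: "n \<ge> 3" and i: "i \<in> idx_tuples n" and j: "1 \<le> j" "j < n"
    and s: "i j = Suc s"
    and mu: "\<forall>k\<in>{1..n-2}. lam k - lam (k + 1) = mu"
    and sig: "sigma = lam (n - 1) - lam n" and sN: "sigma \<notin> \<nat>"
  shows "Cf n mu sigma i * (of_nat (Suc s) * (hh j i - of_nat s))
     + (of_int (u_expo n (i(j := s)) (j+1)) + mu) * Cf n mu sigma (i(j := s)) = 0"
proof -
  let ?A = "{1..n-1}"
  let ?i' = "i(j := s)"
  have jA: "j \<in> ?A" using j by auto
  define R where "R = (\<Sum>k\<in>?A - {j}. i k)"
  define P where "P = (\<Prod>k\<in>?A - {j}. (of_nat (fact (i k)) :: complex))"
  have ii: "i = i(j := Suc s)" using s by auto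
  have S1: "(\<Sum>k\<in>?A. i k) = Suc s + R"
    using sum_upd[OF _ jA, of i "Suc s"] ii unfolding R_def by simp
  have S2: "(\<Sum>k\<in>?A. ?i' k) = s + R"
    using sum_upd[OF _ jA, of i s] unfolding R_def by simp
  have P1: "(\<Prod>k\<in>?A. (of_nat (fact (i k)) :: complex)) = of_nat (fact (Suc s)) * P"
    using prod_upd[OF _ jA, of "\<lambda>x. (of_nat (fact x) :: complex)" i "Suc s"] ii unfolding P_def by simp
  have P2: "(\<Prod>k\<in>?A. (of_nat (fact (?i' k)) :: complex)) = of_nat (fact s) * P"
    using prod_upd[OF _ jA, of "\<lambda>x. (of_nat (fact x) :: complex)" i s] unfolding P_def by simp
  have Pnz: "P \<noteq> 0" unfolding P_def by (simp add: prod_zero_iff)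
  have fnz: "(of_nat (fact s) :: complex) \<noteq> 0" by simp
  have tnz: "(of_nat (Suc s) :: complex) \<noteq> 0" by (simp only: of_nat_eq_0_iff)
  have fS: "(of_nat (fact (Suc s)) :: complex) = of_nat (Suc s) * of_nat (fact s)"
    by (simp add: fact_Suc algebra_simps)
  show ?thesis
  proof (cases "j = n - 1")
    case False
    then have jn: "j + 1 < n" "j \<in> {1..n-2}" using j by auto
    have e1: "i (n-1) = ?i' (n-1)" using False by simp
    have hh: "hh j i = mu + of_nat (i (j+1))"
      using jn mu by (simp add: hh_def)
    have ue: "u_expo n ?i' (j+1) = int (i (j+1)) - int s"
      using jn j n by (auto simp add: u_expo_def)
    define FM where "FM = ffac mu (i (n-1))"
    define FS where "FS = ffac sigma (i (n-1))"
    have FSnz: "FS \<noteq> 0" unfolding FS_def using ffac_nz[OF sN] by simp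
    have C1: "Cf n mu sigma i = (-1) ^ (Suc s + R) * FM / ((of_nat (Suc s) * of_nat (fact s) * P) * FS)"
      unfolding Cf_def S1 P1 fS FM_def FS_def by simp
    have C2: "Cf n mu sigma ?i' = (-1) ^ (s + R) * FM / ((of_nat (fact s) * P) * FS)"
      unfolding Cf_def S2 P2 FM_def FS_def e1[symmetric] by simp
    have y: "of_int (int (i (j+1)) - int s) + mu = mu + of_nat (i (j+1)) - (of_nat s :: complex)"
      by simp
    have m1: "(-1::complex) ^ (Suc s + R) = - ((-1) ^ (s + R))" by simp
    show ?thesis unfolding C1 C2 hh ue y m1 diff_add_eq[symmetric]
      by (rule alg_a[OF tnz])
  next
    case True
    have hh: "hh j i = sigma"
      using True j sig by (simp add: hh_def)
    have ue: "u_expo n ?i' (j+1) = - int s"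
      using True j n by (auto simp add: u_expo_def)
    have e1: "i (n-1) = Suc s" "?i' (n-1) = s" using True s by auto
    define FM where "FM = ffac mu s"
    define FS where "FS = ffac sigma s"
    have FSnz: "FS \<noteq> 0" unfolding FS_def using ffac_nz[OF sN] by simp
    have snz: "sigma - of_nat s \<noteq> 0" using sub_nz[OF sN] .
    have C1: "Cf n mu sigma i = (-1) ^ (Suc s + R) * (FM * (mu - of_nat s))
        / ((of_nat (Suc s) * of_nat (fact s) * P) * (FS * (sigma - of_nat s)))"
      unfolding Cf_def S1 P1 fS FM_def FS_def e1 ffac_Suc by simp
    have C2: "Cf n mu sigma ?i' = (-1) ^ (s + R) * FM / ((of_nat (fact s) * P) * FS)"
      unfolding Cf_def S2 P2 FM_def FS_def e1 by simp
    have y: "of_int (- int s) + mu = mu - (of_nat s :: complex)"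
      by simp
    have m1: "(-1::complex) ^ (Suc s + R) = - ((-1) ^ (s + R))" by simp
    show ?thesis unfolding C1 C2 hh ue y m1
      by (rule alg_b[OF tnz snz])
  qed
qed

end



context VM begin

lemma U_at:
  assumes n3: "n \<ge> 3" and i: "i \<in> idx_tuples n"
  shows "u_lambda sm n rho v mu sigma (u_expo n i) = sm (Cf n mu sigma i) (T 1 i)"
  unfolding u_lambda_at[OF n3 i] u_coeff_def Cf_def lower_vec_def T_def ..

lemma shift_notin:
  assumes n3: "n \<ge> 3" and j: "1 \<le> j" "j < n" and m: "m \<notin> u_expo n ` idx_tuples n"
  shows "shift j (j+1) m \<notin> u_expo n ` idx_tuples n"
proof
  assume "shift j (j+1) m \<in> u_expo n ` idx_tuples n"
  then obtain i where i: "i \<in> idx_tuples n" "shift j (j+1) m = u_expo n i" by auto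
  have "m = shift (j+1) j (shift j (j+1) m)" using shift_shift[of "j+1" j m] by simp
  also have "\<dots> = u_expo n (i(j := Suc (i j)))" using i shift_u_expo[OF n3 i(1) j(1)] j by simp
  finally have "m \<in> u_expo n ` idx_tuples n" using idx_upd[OF i(1) j(1)] j by auto
  with m show False by simp
qed

lemma simple_root:
  assumes n3: "n \<ge> 3" and j: "1 \<le> j" "j < n"
    and mu: "\<forall>k\<in>{1..n-2}. lam k - lam (k + 1) = mu"
    and sig: "sigma = lam (n - 1) - lam n" and sN: "sigma \<notin> \<nat>"
  shows "act_tilde sm rho mu j (j+1) (u_lambda sm n rho v mu sigma) = (\<lambda>m. 0)"
proof (rule ext)
  fix m
  let ?U = "u_lambda sm n rho v mu sigma"
  have jj: "j \<in> {1..n}" "j+1 \<in> {1..n}" using j by auto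
  have jn1: "j \<le> n - 1" using j by simp
  have act: "act_tilde sm rho mu j (j+1) ?U m = rho j (j+1) (?U m)
      + sm (of_int (shift j (j+1) m (j+1)) + mu) (?U (shift j (j+1) m))"
    by (simp add: act_tilde_def)
  show "act_tilde sm rho mu j (j+1) ?U m = 0"
  proof (cases "m \<in> u_expo n ` idx_tuples n")
    case False
    have z1: "?U m = 0" using u_lambda_out[OF False] .
    have z2: "?U (shift j (j+1) m) = 0" using u_lambda_out[OF shift_notin[OF n3 j False]] .
    show ?thesis unfolding act z1 z2 rho_0[OF jj(1) jj(2)] sm_zr by simp
  next
    case True
    then obtain i where i: "i \<in> idx_tuples n" and m: "m = u_expo n i" by auto
    have Em: "rho j (j+1) (?U m) = sm (Cf n mu sigma i * (of_nat (i j) * (hh j i - (of_nat (i j) - 1))))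
        (T 1 (i(j := i j - 1)))"
      unfolding m U_at[OF n3 i] rho_sm[OF jj] E_T[OF j(1) j(2) order_refl j(1)] sm_sm ..
    show ?thesis
    proof (cases "i j")
      case 0
      have notin: "shift j (j+1) m \<notin> u_expo n ` idx_tuples n"
      proof
        assume "shift j (j+1) m \<in> u_expo n ` idx_tuples n"
        then obtain i2 where i2: "i2 \<in> idx_tuples n" "shift j (j+1) m = u_expo n i2" by auto
        have "m = shift (j+1) j (shift j (j+1) m)" using shift_shift[of "j+1" j m] by simp
        also have "\<dots> = u_expo n (i2(j := Suc (i2 j)))" using i2 shift_u_expo[OF n3 i2(1) j(1) jn1] by simp
        finally have "u_expo n i = u_expo n (i2(j := Suc (i2 j)))" using m by simp
        then have "i = i2(j := Suc (i2 j))" using u_expo_inj[OF n3 i idx_upd[OF i2(1) j(1) jn1]] by simp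
        then have "i j = Suc (i2 j)" by (metis fun_upd_same)
        with 0 show False by simp
      qed
      have E0: "rho j (j+1) (?U m) = 0" using Em 0 by (simp add: sm_zl)
      show ?thesis unfolding act E0 u_lambda_out[OF notin] sm_zr by simp
    next
      case (Suc s)
      let ?i' = "i(j := s)"
      have i': "?i' \<in> idx_tuples n" using idx_upd[OF i j(1) jn1] .
      have ii: "?i'(j := Suc (?i' j)) = i" using Suc by auto
      have "m = shift (j+1) j (u_expo n ?i')" using m shift_u_expo[OF n3 i' j(1) jn1] ii by simp
      then have sm': "shift j (j+1) m = u_expo n ?i'" using shift_shift[of j "j+1"] by simp
      have sc: "Cf n mu sigma i * (of_nat (Suc s) * (hh j i - of_nat s))
        + (of_int (u_expo n ?i' (j+1)) + mu) * Cf n mu sigma ?i' = 0"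
        by (rule scalar_id[OF n3 i j Suc mu sig sN])
      have "act_tilde sm rho mu j (j+1) ?U m
          = sm (Cf n mu sigma i * (of_nat (Suc s) * (hh j i - of_nat s))) (T 1 ?i')
            + sm (of_int (u_expo n ?i' (j+1)) + mu) (sm (Cf n mu sigma ?i') (T 1 ?i'))"
        unfolding act Em sm' U_at[OF n3 i'] using Suc by simp
      also have "\<dots> = sm (Cf n mu sigma i * (of_nat (Suc s) * (hh j i - of_nat s))
        + (of_int (u_expo n ?i' (j+1)) + mu) * Cf n mu sigma ?i') (T 1 ?i')"
        by (simp only: sm_sm sm_addl)
      also have "\<dots> = 0" unfolding sc by (rule sm_zl)
      finally show ?thesis .
    qed
  qed
qed

lemma diag:
  assumes n3: "n \<ge> 3" and k: "k \<in> {1..n}"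
  shows "act_tilde sm rho mu k k (u_lambda sm n rho v mu sigma)
       = (\<lambda>m. sm (lam k) (u_lambda sm n rho v mu sigma m))"
proof (rule ext)
  fix m
  let ?U = "u_lambda sm n rho v mu sigma"
  have act: "act_tilde sm rho mu k k ?U m = rho k k (?U m) + sm (of_int (m k) + mu) (?U m) - sm mu (?U m)"
    by (simp add: act_tilde_def shift_same)
  show "act_tilde sm rho mu k k ?U m = sm (lam k) (?U m)"
  proof (cases "m \<in> u_expo n ` idx_tuples n")
    case False
    then show ?thesis by (simp add: act u_lambda_out rho_0[OF k k] sm_zr)
  next
    case True
    then obtain i where i: "i \<in> idx_tuples n" and m: "m = u_expo n i" by auto
    define C where "C = Cf n mu sigma i"
    define w where "w = wtT 1 i k"
    define u where "u = (of_int (u_expo n i k) :: complex)"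
    have uw: "w = - u" using wt_expo[OF n3 i k] unfolding u_def w_def by (simp add: eq_neg_iff_add_eq_0 add.commute)
    have Um: "?U m = sm C (T 1 i)" unfolding m U_at[OF n3 i] C_def ..
    have mk: "of_int (m k) = u" unfolding u_def m ..
    have "act_tilde sm rho mu k k ?U m
       = sm (C * (lam k + w)) (T 1 i) + sm ((u + mu) * C) (T 1 i) - sm (mu * C) (T 1 i)"
      unfolding act Um rho_sm[OF k k] T_weight[OF k order_refl] sm_sm mk w_def ..
    also have "\<dots> = sm (C * (lam k + w) + (u + mu) * C - mu * C) (T 1 i)"
      by (simp only: sm_addl sm_diffl)
    also have "C * (lam k + w) + (u + mu) * C - mu * C = lam k * C"
      unfolding uw by (simp add: algebra_simps)
    finally show ?thesis unfolding Um sm_sm .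
  qed
qed

lemma act_zero:
  assumes "a \<in> {1..n}" "b \<in> {1..n}"
  shows "act_tilde sm rho mu a b (\<lambda>m. 0) = (\<lambda>m. 0)"
  by (simp add: act_tilde_def rho_0[OF assms] sm_zr)

lemma comm_act:
  assumes a: "a \<in> {1..n}" and b: "b \<in> {1..n}" and c: "c \<in> {1..n}"
    and d: "a \<noteq> b" "a \<noteq> c" "b \<noteq> c"
  shows "act_tilde sm rho mu a b f
     = (\<lambda>m. act_tilde sm rho mu a c (act_tilde sm rho mu c b f) m
           - act_tilde sm rho mu c b (act_tilde sm rho mu a c f) m)"
proof (rule ext)
  fix m
  define X where "X = f m"
  define Y where "Y = f (shift c b m)"
  define Z where "Z = f (shift a c m)"
  define W where "W = f (shift a b m)"
  define \<alpha> where "\<alpha> = (of_int (m c) + 1 + mu :: complex)"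
  define \<beta> where "\<beta> = (of_int (m b) + 1 + mu :: complex)"
  define \<delta> where "\<delta> = (of_int (m c) + mu :: complex)"
  have s1: "shift c b (shift a c m) = shift a b m" "shift a c (shift c b m) = shift a b m"
    using d by (auto simp: shift_def fun_eq_iff)
  have v1: "shift a c m c = m c + 1" "shift c b m b = m b + 1" "shift c b (shift a c m) b = m b + 1"
     "shift a c (shift c b m) c = m c" "shift a b m b = m b + 1"
    using d by (auto simp: shift_def)
  have L: "act_tilde sm rho mu a b f m = rho a b X + sm \<beta> W"
    unfolding act_tilde_def using d v1 by (simp add: X_def W_def \<beta>_def)
  have R1: "act_tilde sm rho mu a c (act_tilde sm rho mu c b f) m
     = rho a c (rho c b X) + sm \<beta> (rho a c Y) + sm \<alpha> (rho c b Z) + sm (\<alpha> * \<beta>) W"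
    unfolding act_tilde_def using d v1 s1
    by (simp add: X_def Y_def Z_def W_def \<alpha>_def \<beta>_def rho_add[OF a c] rho_sm[OF a c] sm_addr sm_sm
        algebra_simps)
  have R2: "act_tilde sm rho mu c b (act_tilde sm rho mu a c f) m
     = rho c b (rho a c X) + sm \<alpha> (rho c b Z) + sm \<beta> (rho a c Y) + sm (\<beta> * \<delta>) W"
    unfolding act_tilde_def using d v1 s1
    by (simp add: X_def Y_def Z_def W_def \<alpha>_def \<beta>_def \<delta>_def rho_add[OF c b] rho_sm[OF c b] sm_addr sm_sm
        algebra_simps)
  have C: "rho a c (rho c b X) - rho c b (rho a c X) = rho a b X"
    using comm[OF a c c b, of X] d by simp
  have sc: "\<alpha> * \<beta> - \<beta> * \<delta> = \<beta>" unfolding \<alpha>_def \<beta>_def \<delta>_def by (simp add: algebra_simps)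
  have "act_tilde sm rho mu a c (act_tilde sm rho mu c b f) m
           - act_tilde sm rho mu c b (act_tilde sm rho mu a c f) m
      = (rho a c (rho c b X) - rho c b (rho a c X)) + (sm (\<alpha> * \<beta>) W - sm (\<beta> * \<delta>) W)"
    unfolding R1 R2 by (simp add: algebra_simps)
  also have "\<dots> = rho a b X + sm \<beta> W" unfolding C sm_diffl[symmetric] sc ..
  finally show "act_tilde sm rho mu a b f m = act_tilde sm rho mu a c (act_tilde sm rho mu c b f) m
           - act_tilde sm rho mu c b (act_tilde sm rho mu a c f) m"
    using L by simp
qed

lemma raise:
  assumes n3: "n \<ge> 3"
    and mu: "\<forall>k\<in>{1..n-2}. lam k - lam (k + 1) = mu"
    and sig: "sigma = lam (n - 1) - lam n" and sN: "sigma \<notin> \<nat>"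
  shows "1 \<le> a \<Longrightarrow> a < b \<Longrightarrow> b \<le> n \<Longrightarrow>
     act_tilde sm rho mu a b (u_lambda sm n rho v mu sigma) = (\<lambda>m. 0)"
proof (induction "b - a" arbitrary: b rule: less_induct)
  case less
  show ?case
  proof (cases "b = a + 1")
    case True
    then show ?thesis using simple_root[OF n3 less.prems(1) _ mu sig sN] less.prems by simp
  next
    case False
    define c where "c = b - 1"
    have cb: "b = c + 1" "a < c" "c < n" using False less.prems unfolding c_def by auto
    have IH: "act_tilde sm rho mu a c (u_lambda sm n rho v mu sigma) = (\<lambda>m. 0)"
      using less.hyps[of c] cb less.prems by auto
    have S: "act_tilde sm rho mu c b (u_lambda sm n rho v mu sigma) = (\<lambda>m. 0)"
      using simple_root[OF n3 _ cb(3) mu sig sN] cb less.prems by simp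
    have abc: "a \<in> {1..n}" "b \<in> {1..n}" "c \<in> {1..n}" using cb less.prems by auto
    let ?U = "u_lambda sm n rho v mu sigma"
    have "act_tilde sm rho mu a b ?U = (\<lambda>m. act_tilde sm rho mu a c (act_tilde sm rho mu c b ?U) m
           - act_tilde sm rho mu c b (act_tilde sm rho mu a c ?U) m)"
      by (rule comm_act[OF abc]) (use cb in auto)
    also have "\<dots> = (\<lambda>m. act_tilde sm rho mu a c (\<lambda>m. 0) m - act_tilde sm rho mu c b (\<lambda>m. 0) m)"
      unfolding S IH ..
    also have "\<dots> = (\<lambda>m. 0)" unfolding act_zero[OF abc(1) abc(3)] act_zero[OF abc(3) abc(2)] by simp
    finally show ?thesis .
  qed
qed

end


theorem lemma3p1:
  fixes sm :: "complex \<Rightarrow> 'v::ab_group_add \<Rightarrow> 'v"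
    and n :: nat and mu sigma :: complex and lam :: "nat \<Rightarrow> complex"
    and rho :: "nat \<Rightarrow> nat \<Rightarrow> 'v \<Rightarrow> 'v" and v :: 'v
  assumes "n \<ge> 3"
    and "\<forall>k\<in>{1..n-2}. lam k - lam (k + 1) = mu"
    and "sigma = lam (n - 1) - lam n"
    and "sigma \<notin> \<nat>"
    and "verma_module sm n rho lam v"
  shows "(\<forall>i\<in>{1..n}. \<forall>j\<in>{1..n}. i < j \<longrightarrow>
            act_tilde sm rho mu i j (u_lambda sm n rho v mu sigma) = (\<lambda>m. 0))
       \<and> (\<forall>k\<in>{1..n}. act_tilde sm rho mu k k (u_lambda sm n rho v mu sigma)
            = (\<lambda>m. sm (lam k) (u_lambda sm n rho v mu sigma m)))"
proof -
  have g: "gl_module sm n rho"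
    and hw': "\<forall>i\<in>{1..n}. \<forall>j\<in>{1..n}. i < j \<longrightarrow> rho i j v = 0"
    and wt': "\<forall>k\<in>{1..n}. rho k k v = sm (lam k) v"
    using assms(5) by (simp_all add: verma_module_def)
  have vs: "Vector_Spaces.vector_space sm"
    and lin': "\<forall>i\<in>{1..n}. \<forall>j\<in>{1..n}. Vector_Spaces.linear sm sm (rho i j)"
    and cm: "\<forall>i\<in>{1..n}. \<forall>j\<in>{1..n}. \<forall>k\<in>{1..n}. \<forall>l\<in>{1..n}. \<forall>w.
        rho i j (rho k l w) - rho k l (rho i j w)
          = (if j = k then rho i l w else 0) - (if l = i then rho k j w else 0)"
    using g by (simp_all add: gl_module_def)
  have md: "module sm" using vs by (simp add: module_iff_vector_space)
  have mh: "\<forall>i\<in>{1..n}. \<forall>j\<in>{1..n}. module_hom sm sm (rho i j)"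
    using lin' by (simp add: module_hom_iff_linear)
  have "VM sm n rho lam v"
    unfolding VM_def using md mh cm hw' wt' by blast
  then interpret VM sm n rho lam v .
  show ?thesis using raise[OF assms(1-4)] diag[OF assms(1)] by auto
qed

end
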